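(* Consider an anode solution with active-layer boundary $-h_a\in(-h_3,-h_1)$ in the classical formulation, i.e. with $\eta=s_a$, and assume $j_{\mathrm{cell}}>0$. Then there exists $\varepsilon>0$ such that $\eta(y)<0$ for all $y\in(-h_a,-h_a+\varepsilon)$. Consequently the anodic charge-transfer current is negative on $(-h_a,-h_a+\varepsilon)$.
   Context: Anode model (isothermal, 1D). Fix real numbers $0<h_1<h_a<h_3$ and positive constants $\sigma_{\mathrm{el}},\sigma_{\mathrm{ion}}$ (effective conductivities), $\rho_f$ (fuel density), $D_1$ (effective diffusion coefficient), $M_{H_2}$ and $M_{H_2O}$ (molar masses), $F,R,T$ (Faraday constant, gas constant, temperature) and $l>0$. Also fix $j_{\mathrm{cell}}>0$, $V_3\in\mathbb R$ and bulk mass fractions $C_{H_2}^{\mathrm{bulk}},C_{H_2O}^{\mathrm{bulk}}\in(0,1)$. Define the signed quantity $$s_a=\phi_{\mathrm{el}}-\phi_{\mathrm{ion}}-\frac{RT}{2F}\ln\Big(\frac{C_{H_2}^{\mathrm{bulk}}}{C_{H_2}}\cdot\frac{C_{H_2O}}{C_{H_2O}^{\mathrm{bulk}}}\Big).$$ The activation overpotential is $\eta=s_a$ in the classical formulation and $\eta=|s_a|$ in the modified formulation. Charge-transfer current. For $y\in(-h_a,-h_1)$ set $$i=l\,i_0\Big[\exp\Big(\frac{2F\eta}{RT}\Big)-\exp\Big(-\frac{F\eta}{RT}\Big)\Big],\qquad i_0=32.4\,p_{H_2}^{-0.03}p_{H_2O}^{0.4}e^{-152155/(RT)},$$ where $p_{H_2}=\rho_fRTC_{H_2}/M_{H_2}$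 and $p_{H_2O}=\rho_fRTC_{H_2O}/M_{H_2O}$. An anode solution with active-layer boundary $-h_a$ is a tuple $\phi_{\mathrm{el}},\phi_{\mathrm{ion}},C_{H_2},C_{H_2O}\in C^1([-h_3,-h_1])$ with the following properties. - Regularity: each function is $C^2$ on $[-h_3,-h_a]$ and on $[-h_a,-h_1]$, and $C_{H_2},C_{H_2O}>0$. - Equations on $(-h_a,-h_1)$: $(\sigma_{\mathrm{el}}\phi_{\mathrm{el}}')'=i$, $(\sigma_{\mathrm{ion}}\phi_{\mathrm{ion}}')'=-i$, $(\rho_fD_1C_{H_2}')'=\frac{M_{H_2}}{2F}i$ and $(\rho_fD_1C_{H_2O}')'=-\frac{M_{H_2O}}{2F}i$. - Equations on $(-h_3,-h_a)$: all four left-hand sides vanish. - Boundary conditions at $-h_3$: $-\sigma_{\mathrm{el}}\phi_{\mathrm{el}}'(-h_3)=j_{\mathrm{cell}}$, $\phi_{\mathrm{ion}}'(-h_3)=0$, $\phi_{\mathrm{el}}(-h_3)=V_3$, $C_{H_2}(-h_3)=C_{H_2}^{\mathrm{bulk}}$, $C_{H_2O}(-h_3)=C_{H_2O}^{\mathrm{bulk}}$. - Boundary conditions at $-h_1$: $\phi_{\mathrm{el}}'(-h_1)=0$, $-\sigma_{\mathrm{ion}}\phi_{\mathrm{ion}}'(-h_1)=j_{\mathrm{cell}}$, $C_{H_2}'(-h_1)=C_{H_2O}'(-h_1)=0$. - Interface condition: $s_a(-h_a)=0$. *)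

theory Defs
  imports "HOL-Analysis.Analysis"
begin

definition C1_on :: "real set \<Rightarrow> (real \<Rightarrow> real) \<Rightarrow> (real \<Rightarrow> real) \<Rightarrow> bool" where
  "C1_on S f f' \<longleftrightarrow> (\<forall>y\<in>S. (f has_real_derivative f' y) (at y within S)) \<and> continuous_on S f'"

definition pw_C2 :: "real \<Rightarrow> real \<Rightarrow> real \<Rightarrow> (real \<Rightarrow> real) \<Rightarrow> (real \<Rightarrow> real)
    \<Rightarrow> (real \<Rightarrow> real) \<Rightarrow> (real \<Rightarrow> real) \<Rightarrow> bool" where
  "pw_C2 a b c f f' f1 f2 \<longleftrightarrow> C1_on {a..c} f f' \<and> C1_on {a..b} f' f1 \<and> C1_on {b..c} f' f2"

definition s_a :: "real \<Rightarrow> real \<Rightarrow> real \<Rightarrow> real \<Rightarrow> real \<Rightarrow> real \<Rightarrow> real \<Rightarrow> real \<Rightarrow> real \<Rightarrow> real" where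
  "s_a F R T CbH2 CbH2O phi_el phi_ion CH2 CH2O =
     phi_el - phi_ion - R * T / (2 * F) * ln ((CbH2 / CH2) * (CH2O / CbH2O))"

definition exchange_current :: "real \<Rightarrow> real \<Rightarrow> real \<Rightarrow> real \<Rightarrow> real \<Rightarrow> real \<Rightarrow> real \<Rightarrow> real" where
  "exchange_current rho_f R T MH2 MH2O CH2 CH2O =
     (let pH2 = rho_f * R * T * CH2 / MH2; pH2O = rho_f * R * T * CH2O / MH2O
      in 32.4 * pH2 powr (-0.03) * pH2O powr 0.4 * exp (- 152155 / (R * T)))"

definition ct_current :: "real \<Rightarrow> real \<Rightarrow> real \<Rightarrow> real \<Rightarrow> real \<Rightarrow> real \<Rightarrow> real \<Rightarrow> real \<Rightarrow> real \<Rightarrow> real \<Rightarrow> real" where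
  "ct_current l F rho_f R T MH2 MH2O CH2 CH2O eta =
     l * exchange_current rho_f R T MH2 MH2O CH2 CH2O
       * (exp (2 * F * eta / (R * T)) - exp (- F * eta / (R * T)))"

definition anode_solution_classical ::
  "real \<Rightarrow> real \<Rightarrow> real \<Rightarrow> real \<Rightarrow> real \<Rightarrow> real \<Rightarrow> real \<Rightarrow> real \<Rightarrow> real \<Rightarrow> real
   \<Rightarrow> real \<Rightarrow> real \<Rightarrow> real \<Rightarrow> real \<Rightarrow> real \<Rightarrow> real \<Rightarrow> real
   \<Rightarrow> (real \<Rightarrow> real) \<Rightarrow> (real \<Rightarrow> real) \<Rightarrow> (real \<Rightarrow> real) \<Rightarrow> (real \<Rightarrow> real) \<Rightarrow> bool" where
  "anode_solution_classical h1 ha h3 sig_el sig_ion rho_f D1 MH2 MH2O F R T l jcell V3 CbH2 CbH2O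
      phi_el phi_ion CH2 CH2O \<longleftrightarrow>
   (let eta = (\<lambda>y. s_a F R T CbH2 CbH2O (phi_el y) (phi_ion y) (CH2 y) (CH2O y));
        i = (\<lambda>y. ct_current l F rho_f R T MH2 MH2O (CH2 y) (CH2O y) (eta y))
    in \<exists>el' el1 el2 ion' ion1 ion2 h' h1'' h2'' w' w1 w2.
      pw_C2 (-h3) (-ha) (-h1) phi_el el' el1 el2 \<and>
      pw_C2 (-h3) (-ha) (-h1) phi_ion ion' ion1 ion2 \<and>
      pw_C2 (-h3) (-ha) (-h1) CH2 h' h1'' h2'' \<and>
      pw_C2 (-h3) (-ha) (-h1) CH2O w' w1 w2 \<and>
      (\<forall>y\<in>{-h3..-h1}. CH2 y > 0 \<and> CH2O y > 0) \<and>
      (\<forall>y\<in>{-ha<..<-h1}.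
         sig_el * el2 y = i y \<and> sig_ion * ion2 y = - i y \<and>
         rho_f * D1 * h2'' y = MH2 / (2 * F) * i y \<and>
         rho_f * D1 * w2 y = - (MH2O / (2 * F)) * i y) \<and>
      (\<forall>y\<in>{-h3<..<-ha}.
         sig_el * el1 y = 0 \<and> sig_ion * ion1 y = 0 \<and>
         rho_f * D1 * h1'' y = 0 \<and> rho_f * D1 * w1 y = 0) \<and>
      - sig_el * el' (-h3) = jcell \<and> ion' (-h3) = 0 \<and> phi_el (-h3) = V3 \<and>
      CH2 (-h3) = CbH2 \<and> CH2O (-h3) = CbH2O \<and>
      el' (-h1) = 0 \<and> - sig_ion * ion' (-h1) = jcell \<and> h' (-h1) = 0 \<and> w' (-h1) = 0 \<and>
      eta (-ha) = 0)"

end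

theory Submission
  imports Defs
begin

lemma const_lemma:
  fixes g g' :: "real \<Rightarrow> real"
  assumes "a < b" "continuous_on {a..b} g"
    "\<forall>x\<in>{a..b}. (g has_real_derivative g' x) (at x within {a..b})"
    "\<forall>x\<in>{a<..<b}. g' x = 0"
  shows "g b = g a"
proof (rule DERIV_isconst_end[OF assms(1,2)])
  fix x assume x: "a < x" "x < b"
  have "(g has_real_derivative g' x) (at x within {a..b})" using assms(3) x by auto
  then have "(g has_real_derivative g' x) (at x)" using at_within_Icc_at[OF x] by simp
  then show "(g has_real_derivative 0) (at x)" using assms(4) x by simp
qed

lemma neg_aux: "(a::real) > 0 \<Longrightarrow> a * b < 0 \<Longrightarrow> b < 0"
  by (simp add: mult_less_0_iff)
lemma pos_aux: "(a::real) > 0 \<Longrightarrow> a * b > 0 \<Longrightarrow> b > 0"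
  by (simp add: zero_less_mult_iff)

theorem mainTheorem3:
  fixes h1 ha h3 sig_el sig_ion rho_f D1 MH2 MH2O F R T l jcell V3 CbH2 CbH2O :: real
    and phi_el phi_ion CH2 CH2O :: "real \<Rightarrow> real"
  assumes "0 < h1" "h1 < ha" "ha < h3"
    and "0 < sig_el" "0 < sig_ion" "0 < rho_f" "0 < D1" "0 < MH2" "0 < MH2O"
    and "0 < F" "0 < R" "0 < T" "0 < l" "0 < jcell"
    and "0 < CbH2" "CbH2 < 1" "0 < CbH2O" "CbH2O < 1"
    and "anode_solution_classical h1 ha h3 sig_el sig_ion rho_f D1 MH2 MH2O F R T l jcell V3
           CbH2 CbH2O phi_el phi_ion CH2 CH2O"
  shows "\<exists>\<epsilon>>0. \<forall>y\<in>{-ha<..<-ha+\<epsilon>}.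
           s_a F R T CbH2 CbH2O (phi_el y) (phi_ion y) (CH2 y) (CH2O y) < 0 \<and>
           ct_current l F rho_f R T MH2 MH2O (CH2 y) (CH2O y)
             (s_a F R T CbH2 CbH2O (phi_el y) (phi_ion y) (CH2 y) (CH2O y)) < 0"
proof -
  define eta where "eta = (\<lambda>y. s_a F R T CbH2 CbH2O (phi_el y) (phi_ion y) (CH2 y) (CH2O y))"
  define cur where "cur = (\<lambda>y. ct_current l F rho_f R T MH2 MH2O (CH2 y) (CH2O y) (eta y))"
  obtain el' el1 el2 ion' ion1 ion2 h' h1'' h2'' w' w1 w2 where
    P1: "pw_C2 (-h3) (-ha) (-h1) phi_el el' el1 el2" and
    P2: "pw_C2 (-h3) (-ha) (-h1) phi_ion ion' ion1 ion2" and
    P3: "pw_C2 (-h3) (-ha) (-h1) CH2 h' h1'' h2''" and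
    P4: "pw_C2 (-h3) (-ha) (-h1) CH2O w' w1 w2" and
    pos: "\<forall>y\<in>{-h3..-h1}. CH2 y > 0 \<and> CH2O y > 0" and
    eqR: "\<forall>y\<in>{-ha<..<-h1}.
         sig_el * el2 y = cur y \<and> sig_ion * ion2 y = - cur y \<and>
         rho_f * D1 * h2'' y = MH2 / (2 * F) * cur y \<and>
         rho_f * D1 * w2 y = - (MH2O / (2 * F)) * cur y" and
    eqL: "\<forall>y\<in>{-h3<..<-ha}.
         sig_el * el1 y = 0 \<and> sig_ion * ion1 y = 0 \<and>
         rho_f * D1 * h1'' y = 0 \<and> rho_f * D1 * w1 y = 0" and
    b1: "- sig_el * el' (-h3) = jcell" "ion' (-h3) = 0" and
    b2: "el' (-h1) = 0" "- sig_ion * ion' (-h1) = jcell" "h' (-h1) = 0" "w' (-h1) = 0" and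
    e0: "eta (-ha) = 0"
    using assms(19) unfolding anode_solution_classical_def Let_def eta_def cur_def by blast
  note D = P1 P2 P3 P4
  note D = D[unfolded pw_C2_def C1_on_def]
  have lt1: "-h3 < -ha" and lt2: "-ha < -h1" using assms by auto
  have el_a: "el' (-ha) = el' (-h3)"
    by (rule const_lemma[OF lt1, of el' el1]) (use D(1) eqL assms in \<open>auto elim: continuous_on_subset\<close>)
  have ion_a: "ion' (-ha) = ion' (-h3)"
    by (rule const_lemma[OF lt1, of ion' ion1]) (use D(2) eqL assms in \<open>auto elim: continuous_on_subset\<close>)
  have sub: "{-ha..-h1} \<subseteq> {-h3..-h1}" using assms by auto
  have cion: "continuous_on {-ha..-h1} ion'" using D(2) continuous_on_subset[OF _ sub] by blast
  have ch: "continuous_on {-ha..-h1} h'" using D(3) continuous_on_subset[OF _ sub] by blast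
  have cw: "continuous_on {-ha..-h1} w'" using D(4) continuous_on_subset[OF _ sub] by blast
  define k where "k = 2 * F * rho_f * D1"
  have kpos: "k > 0" using assms unfolding k_def by auto
  have g1: "(\<lambda>y. k / MH2 * h' y + sig_ion * ion' y) (-h1) = (\<lambda>y. k / MH2 * h' y + sig_ion * ion' y) (-ha)"
  proof (rule const_lemma[OF lt2, where g' = "\<lambda>y. k / MH2 * h2'' y + sig_ion * ion2 y"])
    show "continuous_on {- ha..- h1} (\<lambda>y. k / MH2 * h' y + sig_ion * ion' y)"
      using cion ch by (intro continuous_intros)
    show "\<forall>x\<in>{- ha..- h1}. ((\<lambda>y. k / MH2 * h' y + sig_ion * ion' y) has_real_derivative k / MH2 * h2'' x + sig_ion * ion2 x) (at x within {- ha..- h1})"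
      using D(2,3) assms(8) by (auto intro!: derivative_eq_intros)
    show "\<forall>x\<in>{- ha<..<- h1}. k / MH2 * h2'' x + sig_ion * ion2 x = 0"
    proof
      fix x assume x: "x \<in> {- ha<..<- h1}"
      have e1: "sig_ion * ion2 x = - cur x" and e2: "rho_f * D1 * h2'' x = MH2 / (2 * F) * cur x"
        using eqR x by auto
      have "k / MH2 * h2'' x = 2 * F / MH2 * (rho_f * D1 * h2'' x)" unfolding k_def by simp
      also have "\<dots> = cur x" unfolding e2 using assms(8,10) by simp
      finally show "k / MH2 * h2'' x + sig_ion * ion2 x = 0" using e1 by simp
    qed
  qed
  have g2: "(\<lambda>y. k / MH2O * w' y - sig_ion * ion' y) (-h1) = (\<lambda>y. k / MH2O * w' y - sig_ion * ion' y) (-ha)"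
  proof (rule const_lemma[OF lt2, where g' = "\<lambda>y. k / MH2O * w2 y - sig_ion * ion2 y"])
    show "continuous_on {- ha..- h1} (\<lambda>y. k / MH2O * w' y - sig_ion * ion' y)"
      using cion cw by (intro continuous_intros)
    show "\<forall>x\<in>{- ha..- h1}. ((\<lambda>y. k / MH2O * w' y - sig_ion * ion' y) has_real_derivative k / MH2O * w2 x - sig_ion * ion2 x) (at x within {- ha..- h1})"
      using D(2,4) assms(9) by (auto intro!: derivative_eq_intros)
    show "\<forall>x\<in>{- ha<..<- h1}. k / MH2O * w2 x - sig_ion * ion2 x = 0"
    proof
      fix x assume x: "x \<in> {- ha<..<- h1}"
      have e1: "sig_ion * ion2 x = - cur x" and e2: "rho_f * D1 * w2 x = - (MH2O / (2 * F)) * cur x"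
        using eqR x by auto
      have "k / MH2O * w2 x = 2 * F / MH2O * (rho_f * D1 * w2 x)" unfolding k_def by simp
      also have "\<dots> = - cur x" unfolding e2 using assms(9,10) by simp
      finally show "k / MH2O * w2 x - sig_ion * ion2 x = 0" using e1 by simp
    qed
  qed
  have ion0: "ion' (-ha) = 0" using ion_a b1 by simp
  have elv: "el' (-ha) < 0"
  proof -
    have "sig_el * el' (-h3) < 0" using b1(1) assms(14) by linarith
    then show ?thesis using el_a assms(4) by (simp add: mult_less_0_iff)
  qed
  have hv: "h' (-ha) < 0"
  proof -
    have "k / MH2 * h' (-ha) = - jcell" using g1 b2 ion0 by simp
    then have "k / MH2 * h' (-ha) < 0" using assms(14) by linarith
    moreover have "k / MH2 > 0" using kpos assms(8) by simp
    ultimately show ?thesis by (rule neg_aux[rotated])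
  qed
  have wv: "w' (-ha) > 0"
  proof -
    have "k / MH2O * w' (-ha) = jcell" using g2 b2 ion0 by simp
    then have "k / MH2O * w' (-ha) > 0" using assms(14) by linarith
    moreover have "k / MH2O > 0" using kpos assms(9) by simp
    ultimately show ?thesis by (rule pos_aux[rotated])
  qed
  have ha_in: "-ha \<in> {-h3..-h1}" using assms by auto
  have atE: "at (-ha) within {-h3..-h1} = at (-ha)" using at_within_Icc_at lt1 lt2 by blast
  have dd: "\<And>f f'. \<forall>y\<in>{-h3..-h1}. (f has_real_derivative f' y) (at y within {-h3..-h1})
      \<Longrightarrow> (f has_real_derivative f' (-ha)) (at (-ha))"
    using ha_in atE by metis
  have d1: "(phi_el has_real_derivative el' (-ha)) (at (-ha))" using dd D(1) by blast
  have d2: "(phi_ion has_real_derivative ion' (-ha)) (at (-ha))" using dd D(2) by blast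
  have d3: "(CH2 has_real_derivative h' (-ha)) (at (-ha))" using dd D(3) by blast
  have d4: "(CH2O has_real_derivative w' (-ha)) (at (-ha))" using dd D(4) by blast
  have c3: "CH2 (-ha) > 0" and c4: "CH2O (-ha) > 0" using pos ha_in by auto
  define eta2 where "eta2 = (\<lambda>y. phi_el y - phi_ion y - R * T / (2 * F) *
     (ln CbH2 - ln (CH2 y) + ln (CH2O y) - ln CbH2O))"
  define d where "d = el' (-ha) - ion' (-ha) - R * T / (2 * F) *
     (- (h' (-ha) / CH2 (-ha)) + w' (-ha) / CH2O (-ha))"
  have deta2: "(eta2 has_real_derivative d) (at (-ha))"
  proof -
    have l3: "((\<lambda>y. ln (CH2 y)) has_real_derivative h' (-ha) / CH2 (-ha)) (at (-ha))"
      using d3 c3 by (auto intro!: derivative_eq_intros simp: field_simps)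
    have l4: "((\<lambda>y. ln (CH2O y)) has_real_derivative w' (-ha) / CH2O (-ha)) (at (-ha))"
      using d4 c4 by (auto intro!: derivative_eq_intros simp: field_simps)
    have "((\<lambda>y. ln CbH2 - ln (CH2 y) + ln (CH2O y) - ln CbH2O) has_real_derivative
        0 - h' (-ha) / CH2 (-ha) + w' (-ha) / CH2O (-ha) - 0) (at (-ha))"
      by (intro DERIV_diff DERIV_add l3 l4 DERIV_const)
    then have "((\<lambda>y. R * T / (2 * F) * (ln CbH2 - ln (CH2 y) + ln (CH2O y) - ln CbH2O)) has_real_derivative
        R * T / (2 * F) * (0 - h' (-ha) / CH2 (-ha) + w' (-ha) / CH2O (-ha) - 0)) (at (-ha))"
      by (rule DERIV_cmult)
    from DERIV_diff[OF DERIV_diff[OF d1 d2] this] show ?thesis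
      unfolding eta2_def d_def by simp
  qed
  have ev: "eventually (\<lambda>y. y \<in> {-h3<..<-h1}) (nhds (-ha))"
    by (rule eventually_nhds_in_open) (use assms in auto)
  have ev2: "eventually (\<lambda>y. eta y = eta2 y) (nhds (-ha))"
  proof (rule eventually_mono[OF ev])
    fix y assume y: "y \<in> {-h3<..<-h1}"
    then have "CH2 y > 0" "CH2O y > 0" using pos by auto
    then show "eta y = eta2 y" unfolding eta_def eta2_def s_a_def
      using assms(15,17) by (simp add: ln_mult ln_div)
  qed
  have deta: "(eta has_real_derivative d) (at (-ha))"
    using DERIV_cong_ev[OF refl ev2 refl] deta2 by simp
  have q: "- (h' (-ha) / CH2 (-ha)) + w' (-ha) / CH2O (-ha) > 0"
  proof -
    have "h' (-ha) / CH2 (-ha) < 0" using hv c3 by (simp add: divide_neg_pos)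
    moreover have "w' (-ha) / CH2O (-ha) > 0" using wv c4 by simp
    ultimately show ?thesis by linarith
  qed
  have "R * T / (2 * F) > 0" using assms by simp
  then have "R * T / (2 * F) * (- (h' (-ha) / CH2 (-ha)) + w' (-ha) / CH2O (-ha)) > 0"
    using q by (rule mult_pos_pos)
  then have dneg: "d < 0" unfolding d_def using elv ion0 by linarith
  obtain e where e: "e > 0" and ee: "\<And>h. 0 < h \<Longrightarrow> h < e \<Longrightarrow> eta (-ha + h) < eta (-ha)"
    using DERIV_neg_dec_right[OF deta dneg] by blast
  show ?thesis
  proof (intro exI[of _ "min e (ha - h1)"] conjI ballI)
    show "min e (ha - h1) > 0" using e assms by simp
    fix y assume y: "y \<in> {- ha<..<- ha + min e (ha - h1)}"
    have etaneg: "eta y < 0" using ee[of "y + ha"] y e0 by auto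
    then show "s_a F R T CbH2 CbH2O (phi_el y) (phi_ion y) (CH2 y) (CH2O y) < 0"
      unfolding eta_def by simp
    have yin: "y \<in> {-h3..-h1}" using y assms by auto
    have cp: "CH2 y > 0" "CH2O y > 0" using pos yin by auto
    have i0: "exchange_current rho_f R T MH2 MH2O (CH2 y) (CH2O y) > 0"
    proof -
      have "rho_f * R * T * CH2 y / MH2 > 0" using cp assms by simp
      moreover have "rho_f * R * T * CH2O y / MH2O > 0" using cp assms by simp
      ultimately show ?thesis unfolding exchange_current_def Let_def
        by (intro mult_pos_pos) auto
    qed
    have "2 * F * eta y / (R * T) < - F * eta y / (R * T)"
    proof -
      have "2 * F * eta y < - F * eta y" using mult_pos_neg[OF assms(10) etaneg] by simp
      moreover have "R * T > 0" using assms(11,12) by simp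
      ultimately show ?thesis by (rule divide_strict_right_mono)
    qed
    then have "exp (2 * F * eta y / (R * T)) - exp (- F * eta y / (R * T)) < 0" by simp
    moreover have "l * exchange_current rho_f R T MH2 MH2O (CH2 y) (CH2O y) > 0"
      using i0 assms(13) by simp
    ultimately have "ct_current l F rho_f R T MH2 MH2O (CH2 y) (CH2O y) (eta y) < 0"
      unfolding ct_current_def by (simp add: mult_pos_neg)
    then show "ct_current l F rho_f R T MH2 MH2O (CH2 y) (CH2O y)
             (s_a F R T CbH2 CbH2O (phi_el y) (phi_ion y) (CH2 y) (CH2O y)) < 0"
      unfolding eta_def by simp
  qed
qed

end
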